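(* Let $n\ge1$ and let $J\in\mathbb{R}^{2n\times 2n}$ be partitioned as $J=\begin{bmatrix}A & B\\ C & D\end{bmatrix}$ with $A,B,C,D\in\mathbb{R}^{n\times n}$. Assume (Assumption 1) that $J$ is nonsingular and $A$ is positive definite (i.e., $x^TAx>0$ for all $x\ne0$). Write $J^{-1}=\begin{bmatrix} S^\theta_p & S^\theta_q\\ S^v_p & S^v_q\end{bmatrix}$ with $n\times n$ blocks and $\tilde S=[S^v_p\ \ S^v_q]\in\mathbb{R}^{n\times 2n}$. Let $\alpha\in(0,1)^n$ and $K=\operatorname{diag}(k_1,\dots,k_n)$ with $k_i=\pm\frac{1}{\alpha_i}\sqrt{1-\alpha_i^2}$ (fixed signs), let $k_{\max}=\max_i k_i$, $k_{\min}=\min_i k_i$, $\Delta k=k_{\max}-k_{\min}$, and let $M=k_{\max}A-C$, assumed invertible. Suppose (Assumption 2) $$\Delta k < \|M^{-1}\|_2^{-1}\,\|A\|_2^{-1}$$ (which implies $\|M^{-1}\|_2\,\Delta k\,\|A\|_2<1$). Then $S_\dagger := S^v_p + S^v_q K$ is invertible; consequently, for every $\Delta v\in\mathbb{R}^n$ there exists a unique $\Delta p\in\mathbb{R}^n$ such that, with $\Delta q = K\Delta p$ and $\Delta x=[\Delta p^T,\Delta q^T]^T\in\mathbb{R}^{2n}$, one has $\Delta v=\tilde S\,\Delta x$ (i.e., $\Delta x$ is the unique solution of $\Delta v=\tilde S\Delta x$ within the subspace $\{[\Delta p^T,(K\Delta p)^T]^T:\Delta p\in\mathbb{R}^n\}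$).
   Context: $J$ is the Newton–Raphson power flow Jacobian relating $[\Delta p;\Delta q]=J[\Delta\theta;\Delta v]$, with blocks $A=\partial p/\partial\theta$, $B=\partial p/\partial v$, $C=\partial q/\partial\theta$, $D=\partial q/\partial v$; $\Delta p,\Delta q,\Delta\theta,\Delta v\in\mathbb{R}^n$ are perturbations of active power, reactive power, voltage angle and voltage magnitude at the $n$ PQ buses. $\alpha_i$ are the bus power factors $p_i/\sqrt{p_i^2+q_i^2}$. $\|\cdot\|_2$ is the spectral norm (largest singular value). *)

theory Defs
  imports "HOL-Analysis.Analysis"
begin

definition spec_norm :: "real^'n^'m \<Rightarrow> real" where
  "spec_norm M = onorm (\<lambda>x. M *v x)"

definition pos_def :: "real^'n^'n \<Rightarrow> bool" where
  "pos_def A \<longleftrightarrow> (\<forall>x. x \<noteq> 0 \<longrightarrow> x \<bullet> (A *v x) > 0)"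

definition block_mat :: "real^'n^'n \<Rightarrow> real^'n^'n \<Rightarrow> real^'n^'n \<Rightarrow> real^'n^'n
    \<Rightarrow> real^('n+'n)^('n+'n)" where
  "block_mat A B C D = (\<chi> r c. case r of
      Inl i \<Rightarrow> (case c of Inl j \<Rightarrow> A$i$j | Inr j \<Rightarrow> B$i$j)
    | Inr i \<Rightarrow> (case c of Inl j \<Rightarrow> C$i$j | Inr j \<Rightarrow> D$i$j))"

definition blk11 :: "real^('n+'n)^('n+'n) \<Rightarrow> real^'n^'n" where
  "blk11 X = (\<chi> i j. X $ Inl i $ Inl j)"
definition blk12 :: "real^('n+'n)^('n+'n) \<Rightarrow> real^'n^'n" where
  "blk12 X = (\<chi> i j. X $ Inl i $ Inr j)"
definition blk21 :: "real^('n+'n)^('n+'n) \<Rightarrow> real^'n^'n" where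
  "blk21 X = (\<chi> i j. X $ Inr i $ Inl j)"
definition blk22 :: "real^('n+'n)^('n+'n) \<Rightarrow> real^'n^'n" where
  "blk22 X = (\<chi> i j. X $ Inr i $ Inr j)"

definition lower_rows :: "real^('n+'n)^('n+'n) \<Rightarrow> real^('n+'n)^'n" where
  "lower_rows X = (\<chi> i. X $ Inr i)"

definition diag_mat :: "real^'n \<Rightarrow> real^'n^'n" where
  "diag_mat k = (\<chi> i j. if i = j then k$i else 0)"

definition stack :: "real^'n \<Rightarrow> real^'n \<Rightarrow> real^('n+'n)" where
  "stack p q = (\<chi> r. case r of Inl i \<Rightarrow> p$i | Inr i \<Rightarrow> q$i)"

definition kvec :: "('n \<Rightarrow> real) \<Rightarrow> real^'n \<Rightarrow> real^'n" where
  "kvec \<sigma> \<alpha> = (\<chi> i. \<sigma> i * sqrt (1 - (\<alpha>$i)\<^sup>2) / \<alpha>$i)"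

end

theory Submission
  imports Defs
begin

lemma inv_props:
  fixes X :: "real^'n::finite^'n"
  assumes "invertible X"
  shows "X ** matrix_inv X = mat 1 \<and> matrix_inv X ** X = mat 1"
  using assms unfolding invertible_def matrix_inv_def by (rule someI_ex)

lemma sum_plus_univ:
  fixes g :: "'a::finite + 'b::finite \<Rightarrow> real"
  shows "sum g UNIV = (\<Sum>i\<in>UNIV. g (Inl i)) + (\<Sum>j\<in>UNIV. g (Inr j))"
  using sum.Plus[of "UNIV::'a set" "UNIV::'b set" g] by (simp add: comp_def)

lemma lower_stack:
  fixes X :: "real^('n::finite+'n)^('n+'n)"
  shows "lower_rows X *v stack p q = blk21 X *v p + blk22 X *v q"
  by (simp add: vec_eq_iff matrix_vector_mult_def lower_rows_def stack_def blk21_def blk22_def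
      sum_plus_univ)

lemma block_stack:
  "block_mat A B C D *v stack p q = stack (A *v p + B *v q) (C *v p + D *v q)"
  unfolding vec_eq_iff
  by (auto simp: matrix_vector_mult_def block_mat_def stack_def sum_plus_univ split: sum.split)

lemma stack_eq:
  "stack a b = stack c d \<longleftrightarrow> a = c \<and> b = d"
proof
  assume h: "stack a b = stack c d"
  have "a$i = c$i" for i using arg_cong[OF h, of "\<lambda>v. v$Inl i"] by (simp add: stack_def)
  moreover have "b$i = d$i" for i using arg_cong[OF h, of "\<lambda>v. v$Inr i"] by (simp add: stack_def)
  ultimately show "a = c \<and> b = d" by (simp add: vec_eq_iff)
qed simp

lemma lower_apply:
  fixes X :: "real^('n::finite+'n)^('n+'n)"
  shows "(\<chi> i. (X *v s) $ Inr i) = lower_rows X *v s"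
  by (simp add: vec_eq_iff matrix_vector_mult_def lower_rows_def)

lemma stack_decomp:
  "y = stack (\<chi> i. y$Inl i) (\<chi> i. y$Inr i)"
  unfolding vec_eq_iff stack_def
  by (auto split: sum.split)

theorem theorem1:
  fixes A B C D :: "real^'n^'n" and \<alpha> :: "real^'n" and \<sigma> :: "'n \<Rightarrow> real"
  defines "J \<equiv> block_mat A B C D"
    and "kmax \<equiv> Max (range (\<lambda>i. kvec \<sigma> \<alpha> $ i))"
    and "kmin \<equiv> Min (range (\<lambda>i. kvec \<sigma> \<alpha> $ i))"
    and "K \<equiv> diag_mat (kvec \<sigma> \<alpha>)"
  assumes J_inv: "invertible J"
    and A_pd: "pos_def A"
    and alpha: "\<forall>i. 0 < \<alpha>$i \<and> \<alpha>$i < 1"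
    and signs: "\<forall>i. \<sigma> i = 1 \<or> \<sigma> i = -1"
    and M_inv: "invertible (kmax *\<^sub>R A - C)"
    and asm2: "kmax - kmin < inverse (spec_norm (matrix_inv (kmax *\<^sub>R A - C))) * inverse (spec_norm A)"
  shows "invertible (blk21 (matrix_inv J) + blk22 (matrix_inv J) ** K)
       \<and> (\<forall>\<Delta>v. \<exists>!\<Delta>p. \<Delta>v = lower_rows (matrix_inv J) *v stack \<Delta>p (K *v \<Delta>p))"
proof -
  define Ji where "Ji = matrix_inv J"
  define M where "M = kmax *\<^sub>R A - C"
  define k where "k = kvec \<sigma> \<alpha>"
  define S where "S = blk21 Ji + blk22 Ji ** K"
  have JJ: "J ** Ji = mat 1" using inv_props[OF J_inv] Ji_def by simp
  have MM: "matrix_inv M ** M = mat 1" using inv_props[OF M_inv] M_def by simp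
  have kmax_ge: "k$i \<le> kmax" for i unfolding kmax_def k_def by (rule Max_ge) auto
  have kmin_le: "kmin \<le> k$i" for i unfolding kmin_def k_def by (rule Min_le) auto
  define m where "m = spec_norm (matrix_inv M)"
  define a where "a = spec_norm A"
  have m0: "m \<ge> 0" unfolding m_def spec_norm_def by (rule onorm_pos_le) simp
  have a0: "a \<ge> 0" unfolding a_def spec_norm_def by (rule onorm_pos_le) simp
  have mb: "norm (matrix_inv M *v y) \<le> m * norm y" for y
    unfolding m_def spec_norm_def by (rule onorm) simp
  have ab: "norm (A *v y) \<le> a * norm y" for y
    unfolding a_def spec_norm_def by (rule onorm) simp
  have dk0: "kmax - kmin \<ge> 0" using kmax_ge kmin_le by (meson order_trans diff_ge_0_iff_ge)
  have prod: "m * (kmax - kmin) * a < 1"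
  proof (cases "m > 0 \<and> a > 0")
    case True
    then have "kmax - kmin < 1 / (m * a)" using asm2 unfolding m_def a_def M_def
      by (simp add: field_simps)
    then show ?thesis using True by (simp add: field_simps mult.commute mult.left_commute)
  next
    case False
    then have "m = 0 \<or> a = 0" using m0 a0 by auto
    then show ?thesis by auto
  qed
  have SK: "S *v x = lower_rows Ji *v stack x (K *v x)" for x
    unfolding S_def lower_stack
    by (simp add: matrix_vector_mult_add_rdistrib matrix_vector_mul_assoc)
  have ker: "x = 0" if Sx: "S *v x = 0" for x
  proof -
    define s where "s = stack x (K *v x)"
    define y where "y = Ji *v s"
    define \<theta> where "\<theta> = (\<chi> i. y$Inl i)"
    have low: "(\<chi> i. y$Inr i) = 0" using Sx SK lower_apply[of Ji s] unfolding y_def s_def by simp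
    have "J *v y = s" unfolding y_def by (simp add: matrix_vector_mul_assoc JJ)
    moreover have "y = stack \<theta> 0" using stack_decomp[of y] low unfolding \<theta>_def by metis
    ultimately have "stack (A *v \<theta>) (C *v \<theta>) = stack x (K *v x)"
      unfolding J_def s_def by (simp add: block_stack)
    then have hx: "A *v \<theta> = x" and hc: "C *v \<theta> = K *v x" by (auto simp: stack_eq)
    define w where "w = M *v \<theta>"
    have Kx: "(K *v v)$i = k$i * v$i" for v i
      unfolding K_def k_def diag_mat_def matrix_vector_mult_def
      by (simp add: if_distrib[of "\<lambda>f. f _"] if_distrib[of "\<lambda>t. t * _"] cong: if_cong)
    have w2: "w = kmax *\<^sub>R x - K *v x"
      unfolding w_def M_def using hx hc
      by (simp add: matrix_vector_mult_diff_rdistrib flip: scaleR_matrix_vector_assoc)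
    have wc: "w $ i = (kmax - k$i) * x$i" for i
      unfolding w2 by (simp add: Kx algebra_simps)

    have "norm w \<le> norm ((kmax - kmin) *\<^sub>R x)"
    proof (rule norm_le_componentwise_cart)
      fix i
      have "\<bar>kmax - k$i\<bar> \<le> kmax - kmin" using kmax_ge[of i] kmin_le[of i] by auto
      then show "norm (w$i) \<le> norm (((kmax - kmin) *\<^sub>R x)$i)"
        using dk0 by (simp add: wc abs_mult mult_right_mono)
    qed
    then have nw: "norm w \<le> (kmax - kmin) * norm x" using dk0 by simp
    have "\<theta> = matrix_inv M *v w" unfolding w_def by (simp add: matrix_vector_mul_assoc MM)
    then have "norm \<theta> \<le> m * norm w" using mb by simp
    also have "\<dots> \<le> m * ((kmax - kmin) * norm x)" using nw m0 by (simp add: mult_left_mono)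
    also have "\<dots> \<le> m * ((kmax - kmin) * (a * norm \<theta>))"
      using ab[of \<theta>] hx m0 dk0 by (simp add: mult_left_mono)
    finally have "norm \<theta> \<le> (m * (kmax - kmin) * a) * norm \<theta>" by (simp add: algebra_simps)
    then have "(1 - m * (kmax - kmin) * a) * norm \<theta> \<le> 0" by (simp add: algebra_simps)
    moreover have "1 - m * (kmax - kmin) * a > 0" using prod by simp
    ultimately have "norm \<theta> = 0" using norm_ge_zero[of \<theta>]
      by (meson antisym mult_le_0_iff not_less)
    then show "x = 0" using hx by simp
  qed
  have invS: "invertible S"
    unfolding invertible_left_inverse matrix_left_invertible_ker using ker by blast
  have part2: "\<exists>!\<Delta>p. \<Delta>v = lower_rows Ji *v stack \<Delta>p (K *v \<Delta>p)" for \<Delta>v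
  proof -
    have e: "(\<Delta>v = lower_rows Ji *v stack p (K *v p)) = (\<Delta>v = S *v p)" for p by (simp add: SK)
    have "S *v (matrix_inv S *v \<Delta>v) = \<Delta>v"
      using inv_props[OF invS] by (simp add: matrix_vector_mul_assoc)
    moreover have "inj ((*v) S)" by (rule inj_matrix_vector_mult[OF invS])
    ultimately show ?thesis unfolding e by (metis injD)
  qed
  show ?thesis using invS part2 unfolding S_def Ji_def by blast
qed

end
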